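(* Let $(U_n)_{n\in\mathbb{Z}}$ satisfy $U_n\in\mathcal{S}$ for all $n$ and $U_n=I_2$ for all $|n|\ge N_0$, where $N_0\ge1$ is an integer, and let $\mathcal{U}$ be the associated quantum walk evolution. Let $\Psi^{(1)},\Psi^{(2)}\in\mathcal{B}$ be defined by $\Psi^{(1)}(N_0)=(1,0)^T$, $\Psi^{(1)}(n)=0$ for $n\ne N_0$, and $\Psi^{(2)}(-N_0)=(0,1)^T$, $\Psi^{(2)}(n)=0$ for $n\neq -N_0$. Then there exist constants $C>0$ and $0<M<1$ such that for $k=1,2$, $$\|(\mathcal{U}^L\Psi^{(k)})(n)\|_{\mathbb{C}^2}\le C\,L^{2N_0-1}M^L$$ for all $|n|\le N_0$ and all $L\in\mathbb{N}$.
   Context: $\mathcal{S}:=\{M=(m_{jk})\in U(2): m_{11}=m_{22}\neq 0\}$. For each $n$ set $P_n:=\begin{pmatrix}1&0\\0&0\end{pmatrix}U_n$, $Q_n:=\begin{pmatrix}0&0\\0&1\end{pmatrix}U_n$. The state space is $\mathcal{B}=\ell^\infty(\mathbb{Z};\mathbb{C}^2)$ of bounded sequences $\Psi=(\Psi(n))_{n\in\mathbb{Z}}$ with $\Psi(n)\in\mathbb{C}^2$ (column vectors), and the evolution $\mathcal{U}:\mathcal{B}\to\mathcal{B}$ is $(\mathcal{U}\Psi)(n)=P_{n+1}\Psi(n+1)+Q_{n-1}\Psi(n-1)$. *)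

theory Defs
  imports "HOL-Analysis.Analysis"
begin

definition adj2 :: "complex^2^2 \<Rightarrow> complex^2^2" where
  "adj2 M = (\<chi> i j. cnj (M $ j $ i))"

definition U2 :: "(complex^2^2) set" where
  "U2 = {M. M ** adj2 M = mat 1 \<and> adj2 M ** M = mat 1}"

definition classS :: "(complex^2^2) set" where
  "classS = {M \<in> U2. M $ 1 $ 1 = M $ 2 $ 2 \<and> M $ 1 $ 1 \<noteq> 0}"

definition projP :: "complex^2^2" where
  "projP = (\<chi> i j. if i = 1 \<and> j = 1 then 1 else 0)"

definition projQ :: "complex^2^2" where
  "projQ = (\<chi> i j. if i = 2 \<and> j = 2 then 1 else 0)"

definition Pmat :: "(int \<Rightarrow> complex^2^2) \<Rightarrow> int \<Rightarrow> complex^2^2" where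
  "Pmat U n = projP ** U n"

definition Qmat :: "(int \<Rightarrow> complex^2^2) \<Rightarrow> int \<Rightarrow> complex^2^2" where
  "Qmat U n = projQ ** U n"

text \<open>The quantum walk evolution (defined on all sequences; it maps bounded sequences
  to bounded sequences, and agrees with the evolution on \<open>\<ell>^\<infinity>\<close>).\<close>
definition qw_evol :: "(int \<Rightarrow> complex^2^2) \<Rightarrow> (int \<Rightarrow> complex^2) \<Rightarrow> (int \<Rightarrow> complex^2)" where
  "qw_evol U \<Psi> = (\<lambda>n. Pmat U (n+1) *v \<Psi> (n+1) + Qmat U (n-1) *v \<Psi> (n-1))"

definition psi1 :: "nat \<Rightarrow> int \<Rightarrow> complex^2" where
  "psi1 N0 = (\<lambda>n. if n = int N0 then vector [1, 0] else 0)"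

definition psi2 :: "nat \<Rightarrow> int \<Rightarrow> complex^2" where
  "psi2 N0 = (\<lambda>n. if n = - int N0 then vector [0, 1] else 0)"

end

theory Submission imports Defs "Jordan_Normal_Form.Spectral_Radius" begin
no_notation Matrix.vec_index (infixl \<open>$\<close> 100)
hide_const (open) Matrix.mat Matrix.vec Matrix.row Matrix.col

lemma mv1: "((A::complex^2^2) *v x) $ 1 = A$1$1 * x$1 + A$1$2 * x$2"
  by (simp add: matrix_vector_mult_def sum_2)
lemma mv2: "((A::complex^2^2) *v x) $ 2 = A$2$1 * x$1 + A$2$2 * x$2"
  by (simp add: matrix_vector_mult_def sum_2)

lemma qw_1: "qw_evol U \<Psi> n $ 1 = (U (n+1) *v \<Psi> (n+1)) $ 1"
  unfolding qw_evol_def Pmat_def Qmat_def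
  by (simp add: matrix_vector_mul_assoc[symmetric] mv1 projP_def projQ_def)

lemma qw_2: "qw_evol U \<Psi> n $ 2 = (U (n-1) *v \<Psi> (n-1)) $ 2"
  unfolding qw_evol_def Pmat_def Qmat_def
  by (simp add: matrix_vector_mul_assoc[symmetric] mv2 projP_def projQ_def)

lemma norm2_vec2: "norm (x::complex^2) ^ 2 = cmod (x$1) ^ 2 + cmod (x$2) ^ 2"
  by (simp add: norm_vec_def L2_set_def sum_2)

lemma unitary_norm:
  assumes "U \<in> U2" shows "norm (U *v x) = norm (x::complex^2)"
proof -
  from assms have h: "adj2 U ** U = mat 1" by (simp add: U2_def)
  have e: "\<And>i j. (adj2 U ** U) $ i $ j = (if i = j then 1 else 0)"
    using h by (simp add: Finite_Cartesian_Product.mat_def)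
  have h11: "cnj (U$1$1) * U$1$1 + cnj (U$2$1) * U$2$1 = 1"
    using e[of 1 1] by (simp add: matrix_matrix_mult_def sum_2 adj2_def)
  have h12: "cnj (U$1$1) * U$1$2 + cnj (U$2$1) * U$2$2 = 0"
    using e[of 1 2] by (simp add: matrix_matrix_mult_def sum_2 adj2_def)
  have h21: "cnj (U$1$2) * U$1$1 + cnj (U$2$2) * U$2$1 = 0"
    using e[of 2 1] by (simp add: matrix_matrix_mult_def sum_2 adj2_def)
  have h22: "cnj (U$1$2) * U$1$2 + cnj (U$2$2) * U$2$2 = 1"
    using e[of 2 2] by (simp add: matrix_matrix_mult_def sum_2 adj2_def)
  let ?a = "U$1$1" and ?b = "U$1$2" and ?c = "U$2$1" and ?d = "U$2$2" and ?p = "x$1" and ?q = "x$2"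
  have "(?a * ?p + ?b * ?q) * (cnj ?a * cnj ?p + cnj ?b * cnj ?q) +
          (?c * ?p + ?d * ?q) * (cnj ?c * cnj ?p + cnj ?d * cnj ?q) =
          ?p * cnj ?p * (cnj ?a * ?a + cnj ?c * ?c) + ?q * cnj ?q * (cnj ?b * ?b + cnj ?d * ?d)
          + ?p * cnj ?q * (cnj ?b * ?a + cnj ?d * ?c) + ?q * cnj ?p * (cnj ?a * ?b + cnj ?c * ?d)"
    by (simp add: algebra_simps)
  also have "\<dots> = ?p * cnj ?p + ?q * cnj ?q" using h11 h12 h21 h22 by simp
  finally have eq: "(?a * ?p + ?b * ?q) * (cnj ?a * cnj ?p + cnj ?b * cnj ?q) +
          (?c * ?p + ?d * ?q) * (cnj ?c * cnj ?p + cnj ?d * cnj ?q) = ?p * cnj ?p + ?q * cnj ?q" .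
  have "complex_of_real (norm (U *v x) ^ 2) = complex_of_real (norm x ^ 2)"
    unfolding norm2_vec2 of_real_add complex_norm_square mv1 mv2 complex_cnj_add complex_cnj_mult
    by (rule eq)
  hence "norm (U *v x) ^ 2 = norm x ^ 2" using of_real_eq_iff by blast
  thus ?thesis by (simp add: power2_eq_iff_nonneg)
qed

definition dd :: "nat \<Rightarrow> nat" where "dd N = 4*N+2"
definition site :: "nat \<Rightarrow> nat \<Rightarrow> int" where "site N i = int (i div 2) - int N"
definition cp :: "nat \<Rightarrow> 2" where "cp c = (if c = 0 then 1 else 2)"
definition idx :: "nat \<Rightarrow> int \<Rightarrow> nat \<Rightarrow> nat" where "idx N n c = 2 * nat (n + int N) + c"
definition nb :: "nat \<Rightarrow> nat \<Rightarrow> int" where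
  "nb N i = (if i mod 2 = 0 then site N i + 1 else site N i - 1)"
definition toV :: "nat \<Rightarrow> (int \<Rightarrow> complex^2) \<Rightarrow> complex Matrix.vec" where
  "toV N \<Psi> = Matrix.vec (dd N) (\<lambda>i. \<Psi> (site N i) $ cp (i mod 2))"
definition ofV :: "nat \<Rightarrow> complex Matrix.vec \<Rightarrow> int \<Rightarrow> complex^2" where
  "ofV N v = (\<lambda>n. if \<bar>n\<bar> \<le> int N then (\<chi> k. vec_index v (idx N n (if k = 1 then 0 else 1))) else 0)"
definition Tm :: "(int \<Rightarrow> complex^2^2) \<Rightarrow> nat \<Rightarrow> complex Matrix.mat" where
  "Tm U N = Matrix.mat (dd N) (dd N) (\<lambda>(i,j).
     (if \<bar>nb N i\<bar> \<le> int N \<and> j = idx N (nb N i) 0 then U (nb N i) $ cp (i mod 2) $ 1 else 0) +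
     (if \<bar>nb N i\<bar> \<le> int N \<and> j = idx N (nb N i) 1 then U (nb N i) $ cp (i mod 2) $ 2 else 0))"
definition Inv :: "nat \<Rightarrow> (int \<Rightarrow> complex^2) \<Rightarrow> bool" where
  "Inv N \<Psi> \<longleftrightarrow> (\<forall>n. n > int N \<longrightarrow> \<Psi> n $ 1 = 0) \<and> (\<forall>n. n < - int N \<longrightarrow> \<Psi> n $ 2 = 0)"

lemma idx_lt: "\<bar>n\<bar> \<le> int N \<Longrightarrow> c < 2 \<Longrightarrow> idx N n c < dd N"
  unfolding idx_def dd_def by linarith
lemma site_idx: "\<bar>n\<bar> \<le> int N \<Longrightarrow> c < 2 \<Longrightarrow> site N (idx N n c) = n"
  unfolding idx_def site_def by auto
lemma idx_mod: "c < 2 \<Longrightarrow> idx N n c mod 2 = c"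
  unfolding idx_def by auto
lemma site_bound: "i < dd N \<Longrightarrow> \<bar>site N i\<bar> \<le> int N"
  unfolding site_def dd_def by auto
lemma idx_site: "idx N (site N i) (i mod 2) = i"
  unfolding idx_def site_def by auto
lemma toV_idx: "\<bar>n\<bar> \<le> int N \<Longrightarrow> c < 2 \<Longrightarrow> vec_index (toV N \<Psi>) (idx N n c) = \<Psi> n $ cp c"
  unfolding toV_def using idx_lt site_idx idx_mod by simp
lemma dim_toV[simp]: "dim_vec (toV N \<Psi>) = dd N" unfolding toV_def by simp
lemma toV_carrier[simp]: "toV N \<Psi> \<in> carrier_vec (dd N)" unfolding toV_def by simp
lemma Tm_carrier[simp]: "Tm U N \<in> carrier_mat (dd N) (dd N)" unfolding Tm_def by simp

lemma qw_gen: "qw_evol U \<Psi> (site N i) $ cp (i mod 2) = (U (nb N i) *v \<Psi> (nb N i)) $ cp (i mod 2)"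
  by (cases "i mod 2 = 0") (auto simp: cp_def nb_def qw_1 qw_2)

lemma sum_delta_if: "(\<Sum>j\<in>{0..<(d::nat)}. (if P \<and> j = a then x else 0) * f j) = (if P \<and> a < d then x * f a else (0::complex))"
proof -
  have "(\<Sum>j\<in>{0..<d}. (if P \<and> j = a then x else 0) * f j) = (\<Sum>j\<in>{0..<d}. if j = a then (if P then x * f j else 0) else 0)"
    by (intro sum.cong) auto
  also have "\<dots> = (if P \<and> a < d then x * f a else 0)" by (subst sum.delta) auto
  finally show ?thesis .
qed

lemma step:
  assumes inv: "Inv N \<Psi>" and U1: "U (int N + 1) = mat 1" and U2: "U (- int N - 1) = mat 1"
  shows "toV N (qw_evol U \<Psi>) = Tm U N *\<^sub>v toV N \<Psi>"
proof (rule eq_vecI)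
  show "dim_vec (toV N (qw_evol U \<Psi>)) = dim_vec (Tm U N *\<^sub>v toV N \<Psi>)" by (simp add: Tm_def)
  fix i assume "i < dim_vec (Tm U N *\<^sub>v toV N \<Psi>)"
  hence i: "i < dd N" by (simp add: Tm_def)
  let ?m = "nb N i" and ?r = "cp (i mod 2)"
  have lhs: "vec_index (toV N (qw_evol U \<Psi>)) i = (U ?m *v \<Psi> ?m) $ ?r"
    using i qw_gen by (simp add: toV_def)
  have "vec_index (Tm U N *\<^sub>v toV N \<Psi>) i =
     (\<Sum>j\<in>{0..<dd N}. vec_index (Matrix.row (Tm U N) i) j * vec_index (toV N \<Psi>) j)"
    using i by (simp add: Tm_def scalar_prod_def)
  also have "\<dots> = (\<Sum>j\<in>{0..<dd N}.
     (if \<bar>?m\<bar> \<le> int N \<and> j = idx N ?m 0 then U ?m $ ?r $ 1 else 0) * vec_index (toV N \<Psi>) j +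
     (if \<bar>?m\<bar> \<le> int N \<and> j = idx N ?m 1 then U ?m $ ?r $ 2 else 0) * vec_index (toV N \<Psi>) j)"
    using i by (intro sum.cong) (auto simp: Tm_def Matrix.row_def distrib_right)
  also have "\<dots> = (if \<bar>?m\<bar> \<le> int N then (U ?m *v \<Psi> ?m) $ ?r else 0)"
    unfolding sum.distrib sum_delta_if using idx_lt[of ?m N] toV_idx[of ?m N]
    by (cases "?r = 1") (auto simp: mv1 mv2 cp_def)
  also have "\<dots> = (U ?m *v \<Psi> ?m) $ ?r"
  proof (cases "\<bar>?m\<bar> \<le> int N")
    case False
    have sb: "\<bar>site N i\<bar> \<le> int N" using site_bound[OF i] .
    show ?thesis
    proof (cases "i mod 2 = 0")
      case True
      hence "?m = int N + 1" "?r = 1" using False sb by (auto simp: nb_def cp_def)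
      thus ?thesis using inv U1 by (simp add: Inv_def)
    next
      case f2: False
      hence "?m = - int N - 1" "?r = 2" using False sb by (auto simp: nb_def cp_def)
      thus ?thesis using inv U2 by (simp add: Inv_def)
    qed
  qed simp
  finally show "vec_index (toV N (qw_evol U \<Psi>)) i = vec_index (Tm U N *\<^sub>v toV N \<Psi>) i"
    using lhs by simp
qed

lemma Inv_qw:
  assumes Uid: "\<forall>n. \<bar>n\<bar> \<ge> int N \<longrightarrow> U n = mat 1" and inv: "Inv N \<Psi>"
  shows "Inv N (qw_evol U \<Psi>)"
proof -
  have a: "qw_evol U \<Psi> n $ 1 = 0" if "n > int N" for n
  proof -
    have "U (n+1) = mat 1" using Uid that by auto
    thus ?thesis using inv that by (simp add: qw_1 Inv_def)
  qed
  have b: "qw_evol U \<Psi> n $ 2 = 0" if "n < - int N" for n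
  proof -
    have "U (n-1) = mat 1" using Uid that by auto
    thus ?thesis using inv that by (simp add: qw_2 Inv_def)
  qed
  show ?thesis using a b by (simp add: Inv_def)
qed

lemma iter:
  assumes Uid: "\<forall>n. \<bar>n\<bar> \<ge> int N \<longrightarrow> U n = mat 1" and inv: "Inv N \<Psi>"
  shows "toV N ((qw_evol U ^^ L) \<Psi>) = Tm U N ^\<^sub>m L *\<^sub>v toV N \<Psi>"
  using inv
proof (induction L arbitrary: \<Psi>)
  case 0
  then show ?case by (simp add: Tm_def)
next
  case (Suc L)
  have U1: "U (int N + 1) = mat 1" and U2: "U (- int N - 1) = mat 1" using Uid by auto
  have "toV N ((qw_evol U ^^ Suc L) \<Psi>) = toV N ((qw_evol U ^^ L) (qw_evol U \<Psi>))"
    by (simp only: funpow_Suc_right o_apply)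
  also have "\<dots> = Tm U N ^\<^sub>m L *\<^sub>v toV N (qw_evol U \<Psi>)"
    using Suc.IH Inv_qw[OF Uid Suc.prems] by simp
  also have "\<dots> = Tm U N ^\<^sub>m L *\<^sub>v (Tm U N *\<^sub>v toV N \<Psi>)"
    using step[OF Suc.prems U1 U2] by simp
  also have "\<dots> = Tm U N ^\<^sub>m Suc L *\<^sub>v toV N \<Psi>"
    by (simp del: assoc_mult_mat_vec add: assoc_mult_mat_vec[symmetric, of _ "dd N" "dd N" _ "dd N"])
  finally show ?case .
qed

lemma psi1_Inv: "Inv N (psi1 N)" by (simp add: Inv_def psi1_def)
lemma psi2_Inv: "Inv N (psi2 N)" by (simp add: Inv_def psi2_def)

lemma psi1_toV: "toV N (psi1 N) = unit_vec (dd N) (idx N (int N) 0)"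
proof (rule eq_vecI)
  fix i assume "i < dim_vec (unit_vec (dd N) (idx N (int N) 0))"
  hence i: "i < dd N" by simp
  have "(site N i = int N \<and> i mod 2 = 0) \<longleftrightarrow> i = idx N (int N) 0"
    using idx_site[of N i] site_idx[of "int N" N 0] idx_mod[of 0 N "int N"] by auto
  thus "vec_index (toV N (psi1 N)) i = vec_index (unit_vec (dd N) (idx N (int N) 0)) i"
    using i by (auto simp: toV_def psi1_def cp_def unit_vec_def)
qed simp

lemma psi2_toV: "toV N (psi2 N) = unit_vec (dd N) (idx N (- int N) 1)"
proof (rule eq_vecI)
  fix i assume "i < dim_vec (unit_vec (dd N) (idx N (- int N) 1))"
  hence i: "i < dd N" by simp
  have "(site N i = - int N \<and> i mod 2 = 1) \<longleftrightarrow> i = idx N (- int N) 1"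
    using idx_site[of N i] site_idx[of "- int N" N 1] idx_mod[of 1 N "- int N"] by auto
  thus "vec_index (toV N (psi2 N)) i = vec_index (unit_vec (dd N) (idx N (- int N) 1)) i"
    using i by (auto simp: toV_def psi2_def cp_def unit_vec_def)
qed simp

lemma sum_shift:
  fixes g :: "int \<Rightarrow> real"
  assumes g: "\<And>n. g n \<noteq> 0 \<Longrightarrow> \<bar>n\<bar> < K" and d: "\<bar>d\<bar> \<le> 1"
  shows "(\<Sum>n\<in>{-K..K}. g (n+d)) = (\<Sum>n\<in>{-K..K}. g n)"
proof -
  have "(\<Sum>n\<in>{-K..K}. g (n+d)) = (\<Sum>m\<in>{-K+d..K+d}. g m)"
    by (rule sum.reindex_bij_witness[of _ "\<lambda>m. m - d" "\<lambda>n. n+d"]) auto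
  also have "\<dots> = (\<Sum>m\<in>{-K+1..K-1}. g m)"
    by (rule sum.mono_neutral_right) (use g d in \<open>force+\<close>)
  also have "\<dots> = (\<Sum>m\<in>{-K..K}. g m)"
    by (rule sum.mono_neutral_left) (use g in \<open>force+\<close>)
  finally show ?thesis .
qed

lemma toV_ofV: "v \<in> carrier_vec (dd N) \<Longrightarrow> toV N (ofV N v) = v"
proof (rule eq_vecI)
  fix i assume v: "v \<in> carrier_vec (dd N)" and "i < dim_vec v"
  hence i: "i < dd N" by simp
  have "ofV N v (site N i) $ cp (i mod 2) = vec_index v (idx N (site N i) (i mod 2))"
    using site_bound[OF i] by (auto simp: ofV_def cp_def)
  thus "vec_index (toV N (ofV N v)) i = vec_index v i" using i idx_site[of N i] by (simp add: toV_def)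
qed simp


lemma eig_lt1:
  assumes S: "\<forall>n. U n \<in> classS" and Uid: "\<forall>n. \<bar>n\<bar> \<ge> int N \<longrightarrow> U n = mat 1"
    and ev: "eigenvector (Tm U N) v la"
  shows "cmod la < 1"
proof -
  define \<Psi> where "\<Psi> = ofV N v"
  have vc: "v \<in> carrier_vec (dd N)" and vn: "v \<noteq> 0\<^sub>v (dd N)" and tv: "Tm U N *\<^sub>v v = la \<cdot>\<^sub>v v"
    using ev by (auto simp: eigenvector_def Tm_def)
  have tov: "toV N \<Psi> = v" using toV_ofV[OF vc] by (simp add: \<Psi>_def)
  have supp: "\<Psi> n = 0" if "\<bar>n\<bar> > int N" for n using that by (simp add: \<Psi>_def ofV_def)
  have inv: "Inv N \<Psi>" using supp by (auto simp: Inv_def)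
  have U1: "U (int N + 1) = mat 1" and U2: "U (- int N - 1) = mat 1" and UN: "U (int N) = mat 1"
    using Uid by auto
  have tq: "toV N (qw_evol U \<Psi>) = la \<cdot>\<^sub>v toV N \<Psi>"
    using step[OF inv U1 U2] tv tov by simp
  have eq: "qw_evol U \<Psi> n $ c = la * \<Psi> n $ c" if n: "\<bar>n\<bar> \<le> int N" for n c
  proof -
    define k where "k = (if c = 1 then 0 else 1::nat)"
    have k: "k < 2" "cp k = c" using exhaust_2[of c] by (auto simp: k_def cp_def)
    have "vec_index (toV N (qw_evol U \<Psi>)) (idx N n k) = vec_index (la \<cdot>\<^sub>v toV N \<Psi>) (idx N n k)"
      using tq by simp
    thus ?thesis using toV_idx[OF n k(1)] idx_lt[OF n k(1)] k(2) by simp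
  qed
  have normeq: "norm (qw_evol U \<Psi> n) ^ 2 = cmod la ^ 2 * norm (\<Psi> n) ^ 2" if "\<bar>n\<bar> \<le> int N" for n
    using eq[OF that] by (simp add: norm2_vec2 norm_mult power_mult_distrib algebra_simps)
  define K where "K = int N + 2"
  define R where "R = {-K..K}"
  define w where "w = (\<lambda>n. U n *v \<Psi> n)"
  have wz: "w n = 0" if "\<bar>n\<bar> > int N" for n using supp[OF that] by (simp add: w_def)
  have g1: "(\<lambda>n. cmod (w n $ 1) ^ 2) n \<noteq> 0 \<Longrightarrow> \<bar>n\<bar> < K" for n
    using wz[of n] by (force simp: K_def)
  have g2: "(\<lambda>n. cmod (w n $ 2) ^ 2) n \<noteq> 0 \<Longrightarrow> \<bar>n\<bar> < K" for n
    using wz[of n] by (force simp: K_def)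
  have unit: "norm (w n) = norm (\<Psi> n)" for n
    using S unitary_norm[of "U n"] by (simp add: w_def classS_def)
  have "(\<Sum>n\<in>R. norm (qw_evol U \<Psi> n) ^ 2) =
        (\<Sum>n\<in>R. cmod (w (n+1) $ 1) ^ 2) + (\<Sum>n\<in>R. cmod (w (n + (-1)) $ 2) ^ 2)"
    by (simp add: norm2_vec2 qw_1 qw_2 w_def sum.distrib)
  also have "\<dots> = (\<Sum>n\<in>R. cmod (w n $ 1) ^ 2) + (\<Sum>n\<in>R. cmod (w n $ 2) ^ 2)"
    unfolding R_def using sum_shift[of "\<lambda>n. cmod (w n $ 1) ^ 2" K 1, OF g1]
      sum_shift[of "\<lambda>n. cmod (w n $ 2) ^ 2" K "-1", OF g2] by simp
  also have "\<dots> = (\<Sum>n\<in>R. norm (\<Psi> n) ^ 2)"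
    by (simp add: sum.distrib[symmetric] norm2_vec2[symmetric] unit)
  finally have sq: "(\<Sum>n\<in>R. norm (qw_evol U \<Psi> n) ^ 2) = (\<Sum>n\<in>R. norm (\<Psi> n) ^ 2)" .
  define S0 where "S0 = (\<Sum>n\<in>R. norm (\<Psi> n) ^ 2)"
  have hle: "cmod la ^ 2 * norm (\<Psi> n) ^ 2 + (if n = int N + 1 then cmod (\<Psi> (int N) $ 2) ^ 2 else 0)
        \<le> norm (qw_evol U \<Psi> n) ^ 2" for n
  proof (cases "\<bar>n\<bar> \<le> int N")
    case True thus ?thesis using normeq[OF True] by simp
  next
    case False
    hence z: "\<Psi> n = 0" using supp by simp
    show ?thesis
    proof (cases "n = int N + 1")
      case True
      have "qw_evol U \<Psi> n $ 2 = \<Psi> (int N) $ 2" using True UN by (simp add: qw_2)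
      thus ?thesis using z True by (simp add: norm2_vec2)
    qed (use z in simp)
  qed
  have "(\<Sum>n\<in>R. cmod la ^ 2 * norm (\<Psi> n) ^ 2 + (if n = int N + 1 then cmod (\<Psi> (int N) $ 2) ^ 2 else 0))
        \<le> (\<Sum>n\<in>R. norm (qw_evol U \<Psi> n) ^ 2)"
    by (rule sum_mono) (rule hle)
  moreover have "int N + 1 \<in> R" by (simp add: R_def K_def)
  ultimately have main: "cmod la ^ 2 * S0 + cmod (\<Psi> (int N) $ 2) ^ 2 \<le> S0"
    unfolding sq S0_def by (simp add: sum.distrib sum_distrib_left[symmetric] R_def)
  obtain i where i: "i < dd N" "vec_index v i \<noteq> 0" using vn vc by (auto simp: vec_eq_iff)
  have "\<Psi> (site N i) \<noteq> 0"
  proof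
    assume "\<Psi> (site N i) = 0"
    hence "vec_index (toV N \<Psi>) i = 0" using i by (simp add: toV_def)
    thus False using tov i by simp
  qed
  hence pos: "norm (\<Psi> (site N i)) ^ 2 > 0" by simp
  have siteR: "site N i \<in> R" using site_bound[OF i(1)] by (auto simp: R_def K_def)
  have S0pos: "S0 > 0"
  proof -
    have "norm (\<Psi> (site N i)) ^ 2 \<le> S0" unfolding S0_def
      by (rule member_le_sum) (use siteR in \<open>auto simp: R_def\<close>)
    thus ?thesis using pos by linarith
  qed
  have "cmod la ^ 2 * S0 \<le> 1 * S0" using main zero_le_power2[of "cmod (\<Psi> (int N) $ 2)"] by linarith
  hence le1: "cmod la ^ 2 \<le> 1" using S0pos by (simp only: mult_le_cancel_right_pos)
  hence le1': "cmod la \<le> 1" by (simp add: power_le_one_iff abs_le_square_iff)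
  show ?thesis
  proof (rule ccontr)
    assume "\<not> cmod la < 1"
    hence la1: "cmod la = 1" using le1' by simp
    hence la0: "la \<noteq> 0" by auto
    have "cmod (\<Psi> (int N) $ 2) ^ 2 \<le> 0" using main la1 by simp
    hence PN2: "\<Psi> (int N) $ 2 = 0" by simp
    have ind: "\<forall>m. m > int N - int k \<longrightarrow> \<Psi> m = 0" for k
    proof (induction k)
      case 0 thus ?case using supp by simp
    next
      case (Suc k)
      define n where "n = int N - int k"
      have zn: "\<Psi> n = 0"
      proof (cases "n < - int N")
        case True thus ?thesis using supp by simp
      next
        case False
        hence nN: "\<bar>n\<bar> \<le> int N" by (simp add: n_def)
        have z1: "\<Psi> (n+1) = 0" using Suc.IH by (simp add: n_def)
        have "la * \<Psi> n $ 1 = 0" using eq[OF nN, of 1] z1 by (simp add: qw_1)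
        hence p1: "\<Psi> n $ 1 = 0" using la0 by simp
        have "U n $ 2 $ 2 \<noteq> 0" using S[rule_format, of n] by (auto simp: classS_def)
        have p2: "\<Psi> n $ 2 = 0"
        proof (cases "n = int N")
          case True thus ?thesis using PN2 by simp
        next
          case False
          hence n1: "\<bar>n+1\<bar> \<le> int N" using nN by (simp add: n_def)
          have "qw_evol U \<Psi> (n+1) $ 2 = 0" using eq[OF n1, of 2] z1 by simp
          hence "U n $ 2 $ 2 * \<Psi> n $ 2 = 0" using p1 by (simp add: qw_2 mv2)
          thus ?thesis using \<open>U n $ 2 $ 2 \<noteq> 0\<close> by simp
        qed
        show ?thesis using p1 p2 by (simp add: Finite_Cartesian_Product.vec_eq_iff forall_2)
      qed
      show ?case
      proof (intro allI impI)
        fix m assume "m > int N - int (Suc k)"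
        hence "m = n \<or> m > int N - int k" by (auto simp: n_def)
        thus "\<Psi> m = 0" using zn Suc.IH by auto
      qed
    qed
    have "\<Psi> m = 0" for m
      using ind[of "2*N+1" ] supp[of m] by (cases "m > - int N - 1") auto
    hence "S0 = 0" by (simp add: S0_def)
    thus False using S0pos by simp
  qed
qed


lemma smult_mv: fixes A :: "complex Matrix.mat" shows "A \<in> carrier_mat n n \<Longrightarrow> v \<in> carrier_vec n \<Longrightarrow> (a \<cdot>\<^sub>m A) *\<^sub>v v = a \<cdot>\<^sub>v (A *\<^sub>v v)"
  by (rule eq_vecI) (auto simp: carrier_matD carrier_vecD)

lemma smult_pow: fixes A :: "complex Matrix.mat" shows "A \<in> carrier_mat n n \<Longrightarrow> (a \<cdot>\<^sub>m A) ^\<^sub>m k = (a ^ k) \<cdot>\<^sub>m (A ^\<^sub>m k)"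
proof (induction k)
  case 0 thus ?case by (intro eq_matI) auto
next
  case (Suc k)
  have "(a \<cdot>\<^sub>m A) ^\<^sub>m Suc k = (a ^ k \<cdot>\<^sub>m A ^\<^sub>m k) * (a \<cdot>\<^sub>m A)" using Suc by simp
  also have "\<dots> = (a ^ Suc k) \<cdot>\<^sub>m (A ^\<^sub>m k * A)"
    using Suc.prems by (intro eq_matI) (auto simp: algebra_simps carrier_matD)
  finally show ?case by simp
qed

lemma radius_lt1:
  assumes S: "\<forall>n. U n \<in> classS" and Uid: "\<forall>n. \<bar>n\<bar> \<ge> int N \<longrightarrow> U n = mat 1"
  shows "\<exists>c M. 0 < M \<and> M < 1 \<and> (\<forall>k i j. i < dd N \<longrightarrow> j < dd N \<longrightarrow> cmod ((Tm U N ^\<^sub>m k) $$ (i,j)) \<le> c * M ^ k)"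
proof -
  let ?T = "Tm U N"
  have d: "dd N > 0" by (simp add: dd_def)
  have T: "?T \<in> carrier_mat (dd N) (dd N)" by simp
  have evlt: "cmod la < 1" if "la \<in> spectrum ?T" for la
    using that eig_lt1[OF S Uid] by (auto simp: spectrum_def eigenvalue_def)
  obtain la0 where "la0 \<in> spectrum ?T" "spectral_radius ?T = cmod la0"
    using spectral_radius_mem_max(1)[OF T d] by auto
  hence rho: "spectral_radius ?T < 1" "spectral_radius ?T \<ge> 0" using evlt by auto
  define M where "M = (spectral_radius ?T + 1) / 2"
  have M: "0 < M" "M < 1" "spectral_radius ?T < M" using rho by (auto simp: M_def)
  define T' where "T' = complex_of_real (1/M) \<cdot>\<^sub>m ?T"
  have T': "T' \<in> carrier_mat (dd N) (dd N)" by (simp add: T'_def)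
  have TT': "?T = complex_of_real M \<cdot>\<^sub>m T'"
    using M by (intro eq_matI) (auto simp: T'_def)
  have "spectral_radius T' < 1"
  proof -
    obtain mu where mu: "mu \<in> spectrum T'" "spectral_radius T' = cmod mu"
      using spectral_radius_mem_max(1)[OF T' d] by auto
    then obtain v where ev: "eigenvector T' v mu" by (auto simp: spectrum_def eigenvalue_def)
    hence v: "v \<in> carrier_vec (dd N)" "v \<noteq> 0\<^sub>v (dd N)" "T' *\<^sub>v v = mu \<cdot>\<^sub>v v"
      using T' by (auto simp: eigenvector_def)
    have "?T *\<^sub>v v = (complex_of_real M * mu) \<cdot>\<^sub>v v"
      using v T' by (simp add: TT' smult_mv smult_smult_assoc)
    hence "eigenvector ?T v (complex_of_real M * mu)" using v by (simp add: eigenvector_def Tm_def)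
    hence "complex_of_real M * mu \<in> spectrum ?T" by (auto simp: spectrum_def eigenvalue_def)
    hence "norm (complex_of_real M * mu) \<le> spectral_radius ?T"
      using spectral_radius_mem_max(2)[OF T d] by auto
    hence "M * cmod mu \<le> spectral_radius ?T" using M by (simp add: norm_mult)
    hence "M * cmod mu < M * 1" using M by linarith
    hence "cmod mu < 1" using M(1) by (simp only: mult_less_cancel_left_pos)
    thus ?thesis using mu by simp
  qed
  from spectral_radius_jnf_norm_bound_less_1_upper_triangular[OF T' this]
  obtain c where c: "\<forall>k. norm_bound (T' ^\<^sub>m k) c" by auto
  have "cmod ((?T ^\<^sub>m k) $$ (i,j)) \<le> c * M ^ k" if "i < dd N" "j < dd N" for k i j
  proof -
    have "?T ^\<^sub>m k = complex_of_real (M ^ k) \<cdot>\<^sub>m (T' ^\<^sub>m k)"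
      unfolding TT' using smult_pow[OF T'] by simp
    hence "(?T ^\<^sub>m k) $$ (i,j) = complex_of_real (M ^ k) * (T' ^\<^sub>m k) $$ (i,j)"
      using that T' by simp
    moreover have "cmod ((T' ^\<^sub>m k) $$ (i,j)) \<le> c"
      using c that T' by (auto simp: norm_bound_def)
    moreover have "cmod (complex_of_real M ^ k) = M ^ k" using M by (simp add: norm_power)
    ultimately show ?thesis using M
      by (simp add: norm_mult mult.commute mult_left_mono)
  qed
  thus ?thesis using M by blast
qed


lemma norm_le_12: "norm (x::complex^2) \<le> cmod (x$1) + cmod (x$2)"
proof (rule power2_le_imp_le)
  show "norm x ^ 2 \<le> (cmod (x$1) + cmod (x$2)) ^ 2"
    unfolding norm2_vec2 by (simp add: power2_sum)
qed simp

theorem mainTheorem2: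
  fixes U :: "int \<Rightarrow> complex^2^2" and N0 :: nat
  assumes "N0 \<ge> 1"
    and "\<forall>n. U n \<in> classS"
    and "\<forall>n. \<bar>n\<bar> \<ge> int N0 \<longrightarrow> U n = mat 1"
  shows "\<exists>C M. C > 0 \<and> 0 < M \<and> M < 1 \<and>
    (\<forall>\<Psi>\<in>{psi1 N0, psi2 N0}. \<forall>n L. \<bar>n\<bar> \<le> int N0 \<and> L \<ge> 1 \<longrightarrow>
       norm (((qw_evol U) ^^ L) \<Psi> n) \<le> C * real L ^ (2 * N0 - 1) * M ^ L)"
proof -
  obtain c M where M: "0 < M" "M < 1" and
    cb: "\<forall>k i j. i < dd N0 \<longrightarrow> j < dd N0 \<longrightarrow> cmod ((Tm U N0 ^\<^sub>m k) $$ (i,j)) \<le> c * M ^ k"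
    using radius_lt1[OF assms(2) assms(3)] by blast
  define C where "C = 2 * \<bar>c\<bar> + 1"
  have key: "norm (((qw_evol U) ^^ L) \<Psi> n) \<le> C * M ^ L"
    if P: "\<Psi> \<in> {psi1 N0, psi2 N0}" and n: "\<bar>n\<bar> \<le> int N0" for \<Psi> n L
  proof -
    obtain j0 where j0: "j0 < dd N0" "toV N0 \<Psi> = unit_vec (dd N0) j0" "Inv N0 \<Psi>"
    proof (cases "\<Psi> = psi1 N0")
      case True thus ?thesis using that[of "idx N0 (int N0) 0"] psi1_toV psi1_Inv idx_lt[of "int N0" N0 0] by simp
    next
      case False hence "\<Psi> = psi2 N0" using P by simp
      thus ?thesis using that[of "idx N0 (- int N0) 1"] psi2_toV psi2_Inv idx_lt[of "- int N0" N0 1] by simp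
    qed
    have comp: "cmod (((qw_evol U) ^^ L) \<Psi> n $ cp k) \<le> c * M ^ L" if k: "k < 2" for k
    proof -
      have "((qw_evol U) ^^ L) \<Psi> n $ cp k = vec_index (toV N0 (((qw_evol U) ^^ L) \<Psi>)) (idx N0 n k)"
        using toV_idx[OF n k] by simp
      also have "\<dots> = vec_index (Tm U N0 ^\<^sub>m L *\<^sub>v unit_vec (dd N0) j0) (idx N0 n k)"
        using iter[OF assms(3) j0(3)] j0(2) by simp
      also have "\<dots> = (Tm U N0 ^\<^sub>m L) $$ (idx N0 n k, j0)"
        using idx_lt[OF n k] j0(1) pow_mat_dim_square[OF Tm_carrier[of U N0], of L]
        by (simp add: index_mult_mat_vec)
      finally show ?thesis using cb idx_lt[OF n k] j0(1) by simp
    qed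
    have "norm (((qw_evol U) ^^ L) \<Psi> n) \<le> c * M ^ L + c * M ^ L"
      using norm_le_12[of "((qw_evol U) ^^ L) \<Psi> n"] comp[of 0] comp[of 1] by (simp add: cp_def)
    also have "\<dots> \<le> C * M ^ L"
    proof -
      have "c * M ^ L \<le> \<bar>c\<bar> * M ^ L" using M by (intro mult_right_mono) auto
      moreover have "0 \<le> M ^ L" using M by simp
      ultimately show ?thesis by (simp add: C_def algebra_simps)
    qed
    finally show ?thesis .
  qed
  have "\<forall>\<Psi>\<in>{psi1 N0, psi2 N0}. \<forall>n L. \<bar>n\<bar> \<le> int N0 \<and> L \<ge> 1 \<longrightarrow>
       norm (((qw_evol U) ^^ L) \<Psi> n) \<le> C * real L ^ (2 * N0 - 1) * M ^ L"
  proof (intro ballI allI impI)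
    fix \<Psi> n and L :: nat assume P: "\<Psi> \<in> {psi1 N0, psi2 N0}" and h: "\<bar>n\<bar> \<le> int N0 \<and> L \<ge> 1"
    have "1 \<le> real L ^ (2 * N0 - 1)" using h by simp
    moreover have "C > 0" "M ^ L > 0" using M by (auto simp: C_def)
    ultimately have "C * M ^ L * 1 \<le> C * M ^ L * real L ^ (2 * N0 - 1)"
      by (intro mult_left_mono) auto
    hence "C * M ^ L \<le> C * real L ^ (2 * N0 - 1) * M ^ L" by (simp add: algebra_simps)
    thus "norm (((qw_evol U) ^^ L) \<Psi> n) \<le> C * real L ^ (2 * N0 - 1) * M ^ L"
      using key[OF P] h by (meson order_trans)
  qed
  moreover have "C > 0" by (simp add: C_def)
  ultimately show ?thesis using M by blast
qed

end
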